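(* Assume $\gamma$-separability. Fix $h\in\{2,\dots,H+1\}$ and let $\nu$ be a distribution on $\mathcal{S}_{h-1}\times\mathcal{A}$ with $\nu(s,a)\ge\tau$ for all $(s,a)\in\mathcal{S}_{h-1}\times\mathcal{A}$, where $\tau>0$. Then for any distinct $s_1',s_2'\in\mathcal{S}_h$ (each reachable from some pair in $\mathcal{S}_{h-1}\times\mathcal{A}$), $$\|\mathbf{b}_\nu(s_1')-\mathbf{b}_\nu(s_2')\|_1\ge\frac{\tau\gamma}{2}.$$
   Context: In a block MDP with finite latent levels $\mathcal{S}_1,\dots,\mathcal{S}_{H+1}$, finite action set $\mathcal{A}$ with $|\mathcal{A}|=K$, $|\mathcal{S}_h|\le M$, and transition kernel $p(s'\mid s,a)$ (with $p(\cdot\mid s,a)$ supported on $\mathcal{S}_{h}$ for $s\in\mathcal{S}_{h-1}$): for a distribution $\nu$ on $\mathcal{S}_{h-1}\times\mathcal{A}$ and $s'\in\mathcal{S}_h$, $b_\nu(s,a\mid s')=\frac{p(s'\mid s,a)\nu(s,a)}{\sum_{\tilde s,\tilde a}p(s'\mid\tilde s,\tilde a)\nu(\tilde s,\tilde a)}$, and $\mathbf{b}_\nu(s')\in\mathbb{R}^{MK}$ is the vector of these values indexed by $(s,a)\in\mathcal{S}_{h-1}\times\mathcal{A}$, zero-padded. $\gamma$-separability: there is $\gamma>0$ such that for every $h\in\{2,\dots,H+1\}$ and distinct $s',s''\in\mathcal{S}_h$, $\|\mathbf{b}_U(s')-\mathbf{b}_U(s'')\|_1\ge\gamma$, where $U$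 is the uniform distribution on $\mathcal{S}_{h-1}\times\mathcal{A}$. *)

theory Defs
  imports Complex_Main
begin

definition block_mdp ::
  "(nat \<Rightarrow> 's set) \<Rightarrow> 'a set \<Rightarrow> ('s \<Rightarrow> 'a \<Rightarrow> 's \<Rightarrow> real) \<Rightarrow> nat \<Rightarrow> nat \<Rightarrow> nat \<Rightarrow> bool" where
  "block_mdp S A p H M K \<longleftrightarrow>
     finite A \<and> card A = K \<and>
     (\<forall>h\<in>{1..H+1}. finite (S h) \<and> card (S h) \<le> M) \<and>
     (\<forall>h\<in>{2..H+1}. \<forall>s\<in>S (h-1). \<forall>a\<in>A.
        (\<forall>s'. 0 \<le> p s a s') \<and> (\<forall>s'. s' \<notin> S h \<longrightarrow> p s a s' = 0) \<and>
        (\<Sum>s'\<in>S h. p s a s') = 1)"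

definition is_dist_on :: "('s \<times> 'a) set \<Rightarrow> ('s \<times> 'a \<Rightarrow> real) \<Rightarrow> bool" where
  "is_dist_on X \<nu> \<longleftrightarrow> (\<forall>x\<in>X. 0 \<le> \<nu> x) \<and> (\<Sum>x\<in>X. \<nu> x) = 1"

definition unif_dist :: "('s \<times> 'a) set \<Rightarrow> ('s \<times> 'a \<Rightarrow> real)" where
  "unif_dist X = (\<lambda>_. 1 / real (card X))"

text \<open>Backward (posterior) probability b_nu(s,a | s') for s' in S h, indexed by (s,a) in S (h-1) \<times> A.\<close>
definition bvec ::
  "(nat \<Rightarrow> 's set) \<Rightarrow> 'a set \<Rightarrow> ('s \<Rightarrow> 'a \<Rightarrow> 's \<Rightarrow> real) \<Rightarrow> nat \<Rightarrow> ('s \<times> 'a \<Rightarrow> real)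
     \<Rightarrow> 's \<Rightarrow> ('s \<times> 'a \<Rightarrow> real)" where
  "bvec S A p h \<nu> s' = (\<lambda>(s, a). p s a s' * \<nu> (s, a) /
      (\<Sum>(t, b)\<in>S (h - 1) \<times> A. p t b s' * \<nu> (t, b)))"

text \<open>L1 distance of two vectors indexed by a finite set (zero padding does not change it).\<close>
definition l1_dist :: "'i set \<Rightarrow> ('i \<Rightarrow> real) \<Rightarrow> ('i \<Rightarrow> real) \<Rightarrow> real" where
  "l1_dist X f g = (\<Sum>x\<in>X. \<bar>f x - g x\<bar>)"

definition reachable ::
  "(nat \<Rightarrow> 's set) \<Rightarrow> 'a set \<Rightarrow> ('s \<Rightarrow> 'a \<Rightarrow> 's \<Rightarrow> real) \<Rightarrow> nat \<Rightarrow> 's \<Rightarrow> bool" where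
  "reachable S A p h s' \<longleftrightarrow> (\<exists>s\<in>S (h - 1). \<exists>a\<in>A. p s a s' > 0)"

text \<open>gamma-separability (for reachable latent states, where b_U is well defined).\<close>
definition separable ::
  "(nat \<Rightarrow> 's set) \<Rightarrow> 'a set \<Rightarrow> ('s \<Rightarrow> 'a \<Rightarrow> 's \<Rightarrow> real) \<Rightarrow> nat \<Rightarrow> real \<Rightarrow> bool" where
  "separable S A p H \<gamma> \<longleftrightarrow> \<gamma> > 0 \<and>
     (\<forall>h\<in>{2..H+1}. \<forall>s'\<in>S h. \<forall>s''\<in>S h.
        s' \<noteq> s'' \<and> reachable S A p h s' \<and> reachable S A p h s'' \<longrightarrow>
        l1_dist (S (h - 1) \<times> A)
          (bvec S A p h (unif_dist (S (h - 1) \<times> A)) s')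
          (bvec S A p h (unif_dist (S (h - 1) \<times> A)) s'') \<ge> \<gamma>)"

end

theory Submission
  imports Defs
begin

lemma norm_diff:
  fixes u v :: "'i \<Rightarrow> real"
  assumes "finite X" "\<forall>x\<in>X. u x \<ge> 0" "\<forall>x\<in>X. v x \<ge> 0"
    and "sum u X > 0" "sum v X > 0"
  shows "(\<Sum>x\<in>X. \<bar>u x / sum u X - v x / sum v X\<bar>) \<le> 2 * (\<Sum>x\<in>X. \<bar>u x - v x\<bar>) / sum u X"
proof -
  define U where "U = sum u X"
  define V where "V = sum v X"
  have U: "U > 0" and V: "V > 0" using assms U_def V_def by auto
  have pt: "\<bar>u x / U - v x / V\<bar> \<le> \<bar>u x - v x\<bar> / U + v x * \<bar>1/U - 1/V\<bar>" if "x \<in> X" for x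
  proof -
    have "u x / U - v x / V = (u x - v x) / U + v x * (1/U - 1/V)"
      using U V by (simp add: field_simps)
    also have "\<bar>\<dots>\<bar> \<le> \<bar>(u x - v x) / U\<bar> + \<bar>v x * (1/U - 1/V)\<bar>" by (rule abs_triangle_ineq)
    finally show ?thesis using U assms(3) that by (simp add: abs_mult)
  qed
  have "(\<Sum>x\<in>X. \<bar>u x / U - v x / V\<bar>) \<le> (\<Sum>x\<in>X. \<bar>u x - v x\<bar> / U + v x * \<bar>1/U - 1/V\<bar>)"
    by (rule sum_mono) (use pt in auto)
  also have "\<dots> = (\<Sum>x\<in>X. \<bar>u x - v x\<bar>) / U + V * \<bar>1/U - 1/V\<bar>"
    by (simp add: sum.distrib sum_divide_distrib sum_distrib_right V_def)
  also have "V * \<bar>1/U - 1/V\<bar> = \<bar>V - U\<bar> / U"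
  proof -
    have "1/U - 1/V = (V - U) / (U*V)" using U V by (simp add: field_simps)
    hence "V * \<bar>1/U - 1/V\<bar> = \<bar>V * ((V - U) / (U*V))\<bar>" using V by (simp add: abs_mult)
    also have "V * ((V - U) / (U*V)) = (V - U) / U" using V by simp
    finally show ?thesis using U by simp
  qed
  also have "\<bar>V - U\<bar> \<le> (\<Sum>x\<in>X. \<bar>u x - v x\<bar>)"
  proof -
    have "\<bar>V - U\<bar> = \<bar>\<Sum>x\<in>X. u x - v x\<bar>" by (simp add: U_def V_def sum_subtractf abs_minus_commute)
    also have "\<dots> \<le> (\<Sum>x\<in>X. \<bar>u x - v x\<bar>)" by (rule sum_abs)
    finally show ?thesis .
  qed
  hence "\<bar>V - U\<bar> / U \<le> (\<Sum>x\<in>X. \<bar>u x - v x\<bar>) / U" using U by (simp add: divide_right_mono)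
  finally show ?thesis unfolding U_def[symmetric] V_def[symmetric] by simp
qed


lemma core:
  fixes p1 p2 \<nu> :: "'i \<Rightarrow> real"
  assumes X: "finite X" and nn1: "\<forall>x\<in>X. p1 x \<ge> 0" and nn2: "\<forall>x\<in>X. p2 x \<ge> 0"
    and P1: "sum p1 X > 0" and P2: "sum p2 X > 0"
    and nu: "\<forall>x\<in>X. \<tau> \<le> \<nu> x \<and> \<nu> x \<le> 1" and tau: "\<tau> > 0"
    and g: "\<gamma> \<le> (\<Sum>x\<in>X. \<bar>p1 x / sum p1 X - p2 x / sum p2 X\<bar>)"
  shows "\<tau> * \<gamma> / 2 \<le> (\<Sum>x\<in>X. \<bar>p1 x * \<nu> x / (\<Sum>y\<in>X. p1 y * \<nu> y) - p2 x * \<nu> x / (\<Sum>y\<in>X. p2 y * \<nu> y)\<bar>)"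
proof -
  define Z1 where "Z1 = (\<Sum>y\<in>X. p1 y * \<nu> y)"
  define Z2 where "Z2 = (\<Sum>y\<in>X. p2 y * \<nu> y)"
  have nupos: "\<nu> x > 0" if "x \<in> X" for x using nu tau that by force
  have Zpos: "Z > 0" if Zd: "Z = (\<Sum>y\<in>X. p y * \<nu> y)" and nn: "\<forall>x\<in>X. p x \<ge> 0"
    and P: "sum p X > 0" for p Z
  proof -
    obtain x where x: "x \<in> X" "p x > 0"
      using P nn by (metis less_eq_real_def sum_nonpos not_le)
    have "p x * \<nu> x \<le> Z" unfolding Zd
      by (rule member_le_sum) (use x nn nupos X in \<open>auto simp: less_imp_le\<close>)
    moreover have "p x * \<nu> x > 0" using x nupos by simp
    ultimately show ?thesis by simp
  qed
  have Z1: "Z1 > 0" using Zpos[OF Z1_def nn1 P1] .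
  have Z2: "Z2 > 0" using Zpos[OF Z2_def nn2 P2] .
  define u where "u x = p1 x / Z1" for x
  define v where "v x = p2 x / Z2" for x
  have su: "sum u X = sum p1 X / Z1" by (simp add: u_def sum_divide_distrib)
  have sv: "sum v X = sum p2 X / Z2" by (simp add: v_def sum_divide_distrib)
  have supos: "sum u X > 0" using su P1 Z1 by simp
  have svpos: "sum v X > 0" using sv P2 Z2 by simp
  have eu: "u x / sum u X = p1 x / sum p1 X" for x using su Z1 by (simp add: u_def)
  have ev: "v x / sum v X = p2 x / sum p2 X" for x using sv Z2 by (simp add: v_def)
  have "\<gamma> \<le> 2 * (\<Sum>x\<in>X. \<bar>u x - v x\<bar>) / sum u X"
  proof -
    have "(\<Sum>x\<in>X. \<bar>u x / sum u X - v x / sum v X\<bar>) \<le> 2 * (\<Sum>x\<in>X. \<bar>u x - v x\<bar>) / sum u X"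
      by (rule norm_diff[OF X _ _ supos svpos]) (use nn1 nn2 Z1 Z2 in \<open>auto simp: u_def v_def\<close>)
    thus ?thesis using g by (simp only: eu ev)
  qed
  also have "sum u X \<ge> (\<Sum>x\<in>X. p1 x * \<nu> x / Z1)"
    unfolding u_def
  proof (rule sum_mono)
    fix x assume x: "x \<in> X"
    have "p1 x * \<nu> x \<le> p1 x" using nn1 nu x by (simp add: mult_left_le)
    thus "p1 x * \<nu> x / Z1 \<le> p1 x / Z1" using Z1 by (simp add: divide_right_mono)
  qed
  hence "sum u X \<ge> 1" using Z1 by (simp add: Z1_def flip: sum_divide_distrib)
  hence "2 * (\<Sum>x\<in>X. \<bar>u x - v x\<bar>) / sum u X \<le> 2 * (\<Sum>x\<in>X. \<bar>u x - v x\<bar>)"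
  proof -
    have a: "sum u X \<ge> 1" by fact
    have "0 \<le> (\<Sum>x\<in>X. \<bar>u x - v x\<bar>)" by (simp add: sum_nonneg)
    moreover have "\<And>c b::real. 0 \<le> c \<Longrightarrow> 1 \<le> b \<Longrightarrow> 2*c/b \<le> 2*c"
    proof -
      fix c b :: real assume "0 \<le> c" "1 \<le> b"
      hence "2*c*1 \<le> 2*c*b" by (intro mult_left_mono) auto
      thus "2*c/b \<le> 2*c" using \<open>1 \<le> b\<close> by (simp add: divide_le_eq)
    qed
    ultimately show ?thesis using a by blast
  qed
  also have "(\<Sum>x\<in>X. \<bar>u x - v x\<bar>) \<le> (\<Sum>x\<in>X. \<bar>p1 x * \<nu> x / Z1 - p2 x * \<nu> x / Z2\<bar> / \<tau>)"
  proof (rule sum_mono)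
    fix x assume x: "x \<in> X"
    have "\<bar>u x - v x\<bar> = \<bar>p1 x * \<nu> x / Z1 - p2 x * \<nu> x / Z2\<bar> / \<nu> x"
    proof -
      have "p1 x * \<nu> x / Z1 - p2 x * \<nu> x / Z2 = \<nu> x * (u x - v x)" by (simp add: u_def v_def algebra_simps)
      thus ?thesis using nupos[OF x] by (simp add: abs_mult)
    qed
    also have "\<dots> \<le> \<bar>p1 x * \<nu> x / Z1 - p2 x * \<nu> x / Z2\<bar> / \<tau>"
      using nu x tau by (intro divide_left_mono) auto
    finally show "\<bar>u x - v x\<bar> \<le> \<bar>p1 x * \<nu> x / Z1 - p2 x * \<nu> x / Z2\<bar> / \<tau>" .
  qed
  finally have "\<gamma> \<le> 2 * (\<Sum>x\<in>X. \<bar>p1 x * \<nu> x / Z1 - p2 x * \<nu> x / Z2\<bar>) / \<tau>"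
    by (simp add: sum_divide_distrib[symmetric])
  thus ?thesis using tau by (simp add: Z1_def Z2_def field_simps)
qed


lemma bvec_eq: "bvec S A p h \<nu> s' x = p (fst x) (snd x) s' * \<nu> x /
      (\<Sum>y\<in>S (h - 1) \<times> A. p (fst y) (snd y) s' * \<nu> y)"
  by (simp add: bvec_def case_prod_beta)

theorem lemma6:
  fixes S :: "nat \<Rightarrow> 's set" and A :: "'a set" and p :: "'s \<Rightarrow> 'a \<Rightarrow> 's \<Rightarrow> real"
    and H M K h :: nat and \<gamma> \<tau> :: real and \<nu> :: "'s \<times> 'a \<Rightarrow> real" and s1 s2 :: 's
  assumes "block_mdp S A p H M K"
    and "separable S A p H \<gamma>"
    and "h \<in> {2..H+1}"
    and "is_dist_on (S (h - 1) \<times> A) \<nu>"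
    and "\<tau> > 0"
    and "\<forall>x\<in>S (h - 1) \<times> A. \<nu> x \<ge> \<tau>"
    and "s1 \<in> S h" and "s2 \<in> S h" and "s1 \<noteq> s2"
    and "reachable S A p h s1" and "reachable S A p h s2"
  shows "l1_dist (S (h - 1) \<times> A) (bvec S A p h \<nu> s1) (bvec S A p h \<nu> s2) \<ge> \<tau> * \<gamma> / 2"
proof -
  define X where "X = S (h - 1) \<times> A"
  define p1 where "p1 x = p (fst x) (snd x) s1" for x
  define p2 where "p2 x = p (fst x) (snd x) s2" for x
  have bm: "finite A" "\<forall>h\<in>{1..H+1}. finite (S h)"
    "\<forall>h\<in>{2..H+1}. \<forall>s\<in>S (h-1). \<forall>a\<in>A. (\<forall>s'. 0 \<le> p s a s')"
    using assms(1) unfolding block_mdp_def by auto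
  have "h - 1 \<in> {1..H+1}" using assms(3) by auto
  hence fX: "finite X" using bm unfolding X_def by auto
  have nn1: "\<forall>x\<in>X. p1 x \<ge> 0" and nn2: "\<forall>x\<in>X. p2 x \<ge> 0"
    using bm(3) assms(3) unfolding X_def p1_def p2_def by auto
  have Ppos: "sum q X > 0" if q: "q = (\<lambda>x. p (fst x) (snd x) s')" "\<forall>x\<in>X. q x \<ge> 0"
    and r: "reachable S A p h s'" for q s'
  proof -
    obtain s a where sa: "s \<in> S (h-1)" "a \<in> A" "p s a s' > 0" using r unfolding reachable_def by auto
    have "q (s,a) \<le> sum q X" by (rule member_le_sum) (use sa q fX in \<open>auto simp: X_def\<close>)
    thus ?thesis using sa q by simp
  qed
  have P1: "sum p1 X > 0" using Ppos[OF _ nn1 assms(10)] p1_def by blast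
  have P2: "sum p2 X > 0" using Ppos[OF _ nn2 assms(11)] p2_def by blast
  have dist: "\<forall>x\<in>X. 0 \<le> \<nu> x" "sum \<nu> X = 1" using assms(4) unfolding is_dist_on_def X_def by auto
  have nu: "\<forall>x\<in>X. \<tau> \<le> \<nu> x \<and> \<nu> x \<le> 1"
  proof
    fix x assume x: "x \<in> X"
    have "\<nu> x \<le> sum \<nu> X" by (rule member_le_sum) (use x dist fX in auto)
    thus "\<tau> \<le> \<nu> x \<and> \<nu> x \<le> 1" using x assms(6) dist unfolding X_def by auto
  qed
  define U where "U = unif_dist X"
  have bu: "bvec S A p h U s' x = q x / sum q X" if q: "q = (\<lambda>x. p (fst x) (snd x) s')" for q s' x
  proof -
    have "bvec S A p h U s' x = q x * (1 / real (card X)) / (\<Sum>y\<in>X. q y * (1 / real (card X)))"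
      by (simp add: bvec_eq q U_def unif_dist_def X_def)
    also have "\<dots> = q x / sum q X"
    proof (cases "X = {}")
      case True thus ?thesis by simp
    next
      case False
      hence c: "real (card X) > 0" using fX by (simp add: card_gt_0_iff)
      have "(\<Sum>y\<in>X. q y * (1 / real (card X))) = sum q X * (1 / real (card X))"
        by (simp add: sum_divide_distrib)
      thus ?thesis using c by simp
    qed
    finally show ?thesis .
  qed
  have gl: "\<gamma> \<le> l1_dist X (bvec S A p h U s1) (bvec S A p h U s2)"
    using assms(2,3,7-11) unfolding separable_def X_def U_def by blast
  have g: "\<gamma> \<le> (\<Sum>x\<in>X. \<bar>p1 x / sum p1 X - p2 x / sum p2 X\<bar>)"
  proof -
    have e1: "bvec S A p h U s1 x = p1 x / sum p1 X" for x by (rule bu) (simp add: p1_def[abs_def])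
    have e2: "bvec S A p h U s2 x = p2 x / sum p2 X" for x by (rule bu) (simp add: p2_def[abs_def])
    show ?thesis using gl unfolding l1_dist_def e1 e2 .
  qed
  have "\<tau> * \<gamma> / 2 \<le> (\<Sum>x\<in>X. \<bar>p1 x * \<nu> x / (\<Sum>y\<in>X. p1 y * \<nu> y) - p2 x * \<nu> x / (\<Sum>y\<in>X. p2 y * \<nu> y)\<bar>)"
    by (rule core[OF fX nn1 nn2 P1 P2 nu assms(5) g])
  thus ?thesis unfolding l1_dist_def X_def[symmetric] bvec_eq X_def[symmetric] p1_def p2_def .
qed

end
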